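(* Let $\bar\beta=\mathcal{N}$. If $(B,\beta_1,\ldots,\beta_B)$ is a feasible solution of problem (RO-$\Sigma$), then $T^\sigma(\beta_1,\ldots,\beta_B,\bar\beta)\neq T^*(\beta_1,\ldots,\beta_B,\bar\beta)$ for every $\sigma\in\Sigma$.
   Context: A ballot style consists of contests $\mathcal{C}=\{1,\ldots,C\}$, candidates $\mathcal{N}=\{1,\ldots,N\}$ partitioned into nonempty sets $\mathcal{N}_c$ ($c\in\mathcal{C}$), and positive integers $v_c$. A filled-out ballot is a subset $\beta\subseteq\mathcal{N}$; $\mathscr{B}=\{\beta\subseteq\mathcal{N}: |\mathcal{N}_c\cap\beta|\le v_c\ \forall c\}$. For any deck of subsets and $i\in\mathcal{N}_c$: $T^*_i(\beta_1,\ldots,\beta_B)=\sum_{b=1}^B\mathbb{I}\{i\in\beta_b\text{ and }|\mathcal{N}_c\cap\beta_b|\le v_c\}$, and for a bijection $\sigma$ of $\mathcal{N}$, $T^\sigma_i(\beta_1,\ldots,\beta_B)=\sum_{b=1}^B\mathbb{I}\{\sigma(i)\in\beta_b\text{ and }|\{\sigma(j)\in\beta_b: j\in\mathcal{N}_c\}|\le v_c\}$. $\Sigma$ is the set of non-identity bijections $\mathcal{N}\to\mathcal{N}$. Problem (RO-$\Sigma$): minimize $B$ over $B\in\mathbb{N}$ and $\beta_1,\ldots,\beta_B\in\mathscr{B}$ subject to $T^\sigma(\beta_1,\ldots,\beta_B)\neq T^*(\beta_1,\ldots,\beta_B)$ for all $\sigma\in\Sigma$. *)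

theory Defs
  imports Main
begin

text \<open>Ballot style: contests {1..C}, candidates {1..N}, partition part c = N_c, limits v c.\<close>

definition ballot_style :: "nat \<Rightarrow> nat \<Rightarrow> (nat \<Rightarrow> nat set) \<Rightarrow> (nat \<Rightarrow> nat) \<Rightarrow> bool" where
  "ballot_style C N part v \<longleftrightarrow>
     (\<forall>c\<in>{1..C}. part c \<noteq> {} \<and> v c > 0) \<and>
     (\<forall>c\<in>{1..C}. \<forall>d\<in>{1..C}. c \<noteq> d \<longrightarrow> part c \<inter> part d = {}) \<and>
     (\<Union>c\<in>{1..C}. part c) = {1..N}"

definition ballots :: "nat \<Rightarrow> nat \<Rightarrow> (nat \<Rightarrow> nat set) \<Rightarrow> (nat \<Rightarrow> nat) \<Rightarrow> nat set set" where
  "ballots C N part v = {\<beta>. \<beta> \<subseteq> {1..N} \<and> (\<forall>c\<in>{1..C}. card (part c \<inter> \<beta>) \<le> v c)}"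

definition Tstar :: "(nat \<Rightarrow> nat set) \<Rightarrow> (nat \<Rightarrow> nat) \<Rightarrow> nat set list \<Rightarrow> nat \<Rightarrow> nat \<Rightarrow> nat" where
  "Tstar part v deck c i = length (filter (\<lambda>\<beta>. i \<in> \<beta> \<and> card (part c \<inter> \<beta>) \<le> v c) deck)"

definition Tsig :: "(nat \<Rightarrow> nat set) \<Rightarrow> (nat \<Rightarrow> nat) \<Rightarrow> (nat \<Rightarrow> nat) \<Rightarrow> nat set list \<Rightarrow> nat \<Rightarrow> nat \<Rightarrow> nat" where
  "Tsig part v \<sigma> deck c i =
     length (filter (\<lambda>\<beta>. \<sigma> i \<in> \<beta> \<and> card {\<sigma> j | j. j \<in> part c \<and> \<sigma> j \<in> \<beta>} \<le> v c) deck)"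

definition T_differ :: "nat \<Rightarrow> (nat \<Rightarrow> nat set) \<Rightarrow> (nat \<Rightarrow> nat) \<Rightarrow> (nat \<Rightarrow> nat) \<Rightarrow> nat set list \<Rightarrow> bool" where
  "T_differ C part v \<sigma> deck \<longleftrightarrow>
     (\<exists>c\<in>{1..C}. \<exists>i\<in>part c. Tsig part v \<sigma> deck c i \<noteq> Tstar part v deck c i)"

definition Sigma_perms :: "nat \<Rightarrow> (nat \<Rightarrow> nat) set" where
  "Sigma_perms N = {\<sigma>. bij_betw \<sigma> {1..N} {1..N} \<and> (\<exists>i\<in>{1..N}. \<sigma> i \<noteq> i)}"

text \<open>Feasible solution of (RO-Sigma): B = length deck.\<close>
definition RO_feasible :: "nat \<Rightarrow> nat \<Rightarrow> (nat \<Rightarrow> nat set) \<Rightarrow> (nat \<Rightarrow> nat) \<Rightarrow> nat set list \<Rightarrow> bool" where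
  "RO_feasible C N part v deck \<longleftrightarrow>
     set deck \<subseteq> ballots C N part v \<and>
     (\<forall>\<sigma>\<in>Sigma_perms N. T_differ C part v \<sigma> deck)"

end

theory Submission
  imports Defs
begin

theorem proposition7:
  fixes C N :: nat and part :: "nat \<Rightarrow> nat set" and v :: "nat \<Rightarrow> nat"
    and deck :: "nat set list"
  assumes "ballot_style C N part v"
    and "RO_feasible C N part v deck"
  shows "\<forall>\<sigma>\<in>Sigma_perms N. T_differ C part v \<sigma> (deck @ [{1..N}])"
proof
  fix \<sigma> assume s: "\<sigma> \<in> Sigma_perms N"
  hence bij: "bij_betw \<sigma> {1..N} {1..N}" by (simp add: Sigma_perms_def)
  from assms(2) s obtain c i where c: "c \<in> {1..C}" and i: "i \<in> part c"
    and d: "Tsig part v \<sigma> deck c i \<noteq> Tstar part v deck c i"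
    by (auto simp: RO_feasible_def T_differ_def)
  have sub: "part c \<subseteq> {1..N}" using assms(1) c unfolding ballot_style_def by blast
  have inj: "inj_on \<sigma> (part c)" using bij sub bij_betw_imp_inj_on inj_on_subset by blast
  have mem: "\<And>j. j \<in> part c \<Longrightarrow> \<sigma> j \<in> {1..N}"
    using bij_betw_apply[OF bij] sub by (meson subsetD)
  have si: "\<sigma> i \<in> {1..N}" using mem i by simp
  have set: "{\<sigma> j | j. j \<in> part c \<and> \<sigma> j \<in> {1..N}} = \<sigma> ` part c"
    using mem by auto
  have cd: "card {\<sigma> j | j. j \<in> part c \<and> \<sigma> j \<in> {1..N}} = card (part c \<inter> {1..N})"
    unfolding set using inj sub card_image by (metis inf.absorb1)
  have e1: "Tsig part v \<sigma> (deck @ [{1..N}]) c i = Tsig part v \<sigma> deck c i +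
      (if card (part c \<inter> {1..N}) \<le> v c then 1 else 0)"
    unfolding Tsig_def using si cd by simp
  have e2: "Tstar part v (deck @ [{1..N}]) c i = Tstar part v deck c i +
      (if card (part c \<inter> {1..N}) \<le> v c then 1 else 0)"
    unfolding Tstar_def using i sub by auto
  have "Tsig part v \<sigma> (deck @ [{1..N}]) c i \<noteq> Tstar part v (deck @ [{1..N}]) c i"
    unfolding e1 e2 using d by simp
  thus "T_differ C part v \<sigma> (deck @ [{1..N}])" using c i by (auto simp: T_differ_def)
qed

end
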